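(* Define a sequence $\gamma(0),\gamma(1),\gamma(2),\dots$ by $\gamma(0)=0$ and recursively $$\gamma(2^l-k)=\frac{2^l+2(-1)^l}{3}-k+2\gamma(k)\qquad (l\ge 0,\ 0\le k\le 2^{l-1}).$$ For $n\ge0$ let $P(n)$ be the $n\times n$ matrix with entries $\binom{i+j}{i}$, $0\le i,j<n$, and $\chi_n(t)=\det(tI(n)-P(n))$. Then for all $n\in\mathbf{N}$, $$\chi_n(t)\equiv (t+1)^{\gamma(n)}(t^2+t+1)^{\gamma_2(n)}\pmod 2,$$ where $\gamma_2(n)=\frac12(n-\gamma(n))$.
   Context: $I(n)$ is the $n\times n$ identity matrix; the congruence is coefficientwise in $\mathbf{Z}[t]$. *)

theory Defs
  imports "Jordan_Normal_Form.Char_Poly" "HOL-Number_Theory.Cong"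
begin

text \<open>For n \<ge> 1 let l be the least exponent with n \<le> 2^l and k = 2^l - n;
  then 0 \<le> k \<le> 2^(l-1) (indeed k < n), so the defining recursion
  gamma(2^l - k) = (2^l + 2(-1)^l)/3 - k + 2 gamma(k) determines gamma.\<close>

definition gamma_exp :: "nat \<Rightarrow> nat" where
  "gamma_exp n = (LEAST l. n \<le> 2 ^ l)"

lemma gamma_exp_le: "n \<le> 2 ^ gamma_exp n"
  unfolding gamma_exp_def by (rule LeastI[of _ n]) (simp add: less_imp_le)

lemma gamma_term: assumes "n \<noteq> 0" shows "2 ^ gamma_exp n - n < n"
proof (cases "gamma_exp n")
  case 0 then show ?thesis using gamma_exp_le[of n] assms by simp
next
  case (Suc m)
  have "\<not> n \<le> 2 ^ m" using Suc unfolding gamma_exp_def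
    using not_less_Least[of m "\<lambda>l. n \<le> 2 ^ l"] by simp
  then show ?thesis using Suc by simp
qed

function gamma :: "nat \<Rightarrow> int" where
  "gamma n = (if n = 0 then 0 else
     (let l = gamma_exp n; k = 2 ^ l - n in
       (2 ^ l + 2 * (-1) ^ l) div 3 - int k + 2 * gamma k))"
  by auto
termination
  by (relation "measure id") (auto simp: gamma_term)

declare gamma.simps[simp del]

definition gamma2 :: "nat \<Rightarrow> int" where
  "gamma2 n = (int n - gamma n) div 2"

definition pascal_mat :: "nat \<Rightarrow> int mat" where
  "pascal_mat n = mat n n (\<lambda>(i, j). int ((i + j) choose i))"

end

theory Submission
  imports Defs "HOL-Library.Z2"
begin

lemma bit_add_self[simp]: "(a::bit) + a = 0"
  by (cases a) simp_all

lemma bpoly_add_self[simp]: "(p::bit poly) + p = 0"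
proof (rule poly_eqI)
  fix n show "coeff (p+p) n = coeff 0 n" by (simp only: coeff_add bit_add_self coeff_0)
qed

lemma two_bpoly[simp]: "(2::bit poly) = 0"
  by (metis one_add_one bpoly_add_self)

lemma coeff_11_power: "coeff ([:1,1:] ^ a :: bit poly) b = of_nat (a choose b)"
proof (cases "b \<le> a")
  case True then show ?thesis by (simp add: coeff_linear_poly_power)
next
  case False
  have "degree ([:1,1:] ^ a :: bit poly) \<le> a"
    by (metis degree_linear_power one_neq_zero order.refl)
  then show ?thesis using False by (simp add: coeff_eq_0 binomial_eq_0)
qed

lemma frob: "([:1,1:] :: bit poly) ^ (2 ^ L) = 1 + monom 1 (2 ^ L)"
proof (induction L)
  case 0 then show ?case by (simp add: monom_Suc one_pCons)
next
  case (Suc L)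
  have "([:1,1:] :: bit poly) ^ (2 ^ Suc L) = (([:1,1:] :: bit poly) ^ (2 ^ L))^2"
    by (simp add: power_mult[symmetric] mult.commute)
  also have "\<dots> = (1 + monom 1 (2 ^ L))^2" using Suc by simp
  also have "\<dots> = 1 + (monom 1 (2^L) + monom 1 (2^L)) + monom 1 (2^L) ^ 2"
    by (simp add: power2_eq_square algebra_simps)
  also have "\<dots> = 1 + monom 1 (2 ^ Suc L)"
    by (simp add: monom_power mult.commute)
  finally show ?case .
qed

definition bc :: "nat \<Rightarrow> nat \<Rightarrow> bit" where
  "bc i j = of_nat ((i + j) choose i)"

lemma bc_coeff: "bc i j = coeff ([:1,1:] ^ (i+j) :: bit poly) i"
  by (simp add: bc_def coeff_11_power)

lemma shift_coeff:
  "coeff ([:1,1:] ^ (a + 2^L) :: bit poly) b =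
     coeff ([:1,1:] ^ a :: bit poly) b + (if b < 2^L then 0 else coeff ([:1,1:] ^ a :: bit poly) (b - 2^L))"
  by (simp add: power_add frob algebra_simps coeff_monom_mult)

lemma bcA: assumes "i < 2^L" "j < 2^L" shows "bc (i + 2^L) j = bc i j"
proof -
  have "bc (i + 2^L) j = coeff ([:1,1:] ^ ((i+j) + 2^L) :: bit poly) (i + 2^L)"
    by (simp add: bc_coeff add_ac)
  also have "\<dots> = coeff ([:1,1:] ^ (i+j) :: bit poly) (i + 2^L) + coeff ([:1,1:] ^ (i+j) :: bit poly) i"
    by (subst shift_coeff) simp
  also have "\<dots> = bc i j"
    using assms by (simp add: coeff_11_power binomial_eq_0 bc_def)
  finally show ?thesis .
qed

lemma bcB: assumes "i < 2^L" "j < 2^L" shows "bc i (j + 2^L) = bc i j"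
proof -
  have "bc i (j + 2^L) = coeff ([:1,1:] ^ ((i+j) + 2^L) :: bit poly) i"
    by (simp add: bc_coeff add_ac)
  also have "\<dots> = bc i j"
    using assms by (subst shift_coeff) (simp add: bc_coeff)
  finally show ?thesis .
qed

lemma bcC: assumes "i < 2^L" "j < 2^L" shows "bc (i + 2^L) (j + 2^L) = 0"
proof -
  have "bc (i + 2^L) (j + 2^L) = coeff ([:1,1:] ^ ((i+j) + 2^(Suc L)) :: bit poly) (i + 2^L)"
  proof -
    have "i + 2^L + (j + 2^L) = (i+j) + 2^(Suc L)" by simp
    then show ?thesis unfolding bc_coeff by metis
  qed
  also have "\<dots> = coeff ([:1,1:] ^ (i+j) :: bit poly) (i + 2^L)"
    using assms by (subst shift_coeff) simp
  also have "\<dots> = 0"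
    using assms by (simp add: coeff_11_power binomial_eq_0)
  finally show ?thesis .
qed

definition dm :: "nat \<Rightarrow> bit mat" where
  "dm n = mat n n (\<lambda>(i,j). bc i j)"

lemma dm_carrier[simp]: "dm n \<in> carrier_mat n n" by (simp add: dm_def)
lemma dim_row_dm[simp]: "dim_row (dm n) = n" by (simp add: dm_def)
lemma dim_col_dm[simp]: "dim_col (dm n) = n" by (simp add: dm_def)
lemma dm_one: "dm 1 = 1\<^sub>m 1" by (rule eq_matI) (auto simp: dm_def bc_def)
lemma dm_sq_carrier[simp]: "dm n * dm n \<in> carrier_mat n n"
  using mult_carrier_mat[OF dm_carrier dm_carrier] .
lemma dm_index[simp]: "i < n \<Longrightarrow> j < n \<Longrightarrow> dm n $$ (i,j) = bc i j" by (simp add: dm_def)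

lemma bit_mat_add_self: "(A::bit mat) \<in> carrier_mat n m \<Longrightarrow> A + A = 0\<^sub>m n m"
  by (rule eq_matI) auto

lemma dm_block: "dm (2^L + 2^L) = four_block_mat (dm (2^L)) (dm (2^L)) (dm (2^L)) (0\<^sub>m (2^L) (2^L))"
proof (rule eq_matI)
  fix i j assume i: "i < dim_row (four_block_mat (dm (2^L)) (dm (2^L)) (dm (2^L)) (0\<^sub>m (2^L) (2^L)))"
    and j: "j < dim_col (four_block_mat (dm (2^L)) (dm (2^L)) (dm (2^L)) (0\<^sub>m (2^L) (2^L)))"
  let ?h = "2^L :: nat"
  from i j have i': "i < ?h + ?h" and j': "j < ?h + ?h" by auto
  show "dm (2^L + 2^L) $$ (i,j) = four_block_mat (dm (2^L)) (dm (2^L)) (dm (2^L)) (0\<^sub>m (2^L) (2^L)) $$ (i,j)"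
  proof (cases "i < ?h")
    case True note ih = this
    show ?thesis
    proof (cases "j < ?h")
      case True then show ?thesis using ih i' j' by simp
    next
      case False
      then obtain j0 where j0: "j = j0 + ?h" "j0 < ?h" using j' by (metis add_diff_inverse_nat add.commute less_diff_conv2 not_less)
      then show ?thesis using ih i' j' bcB[of i L j0] by simp
    qed
  next
    case False
    then obtain i0 where i0: "i = i0 + ?h" "i0 < ?h" using i' by (metis add_diff_inverse_nat add.commute less_diff_conv2 not_less)
    show ?thesis
    proof (cases "j < ?h")
      case True then show ?thesis using i0 i' j' bcA[of i0 L j] by simp
    next
      case False
      then obtain j0 where j0: "j = j0 + ?h" "j0 < ?h" using j' by (metis add_diff_inverse_nat add.commute less_diff_conv2 not_less)
      then show ?thesis using i0 i' j' bcC[of i0 L j0] by simp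
    qed
  qed
qed auto

lemma dm_sq_block: "dm (2^L + 2^L) * dm (2^L + 2^L) =
   four_block_mat (0\<^sub>m (2^L) (2^L)) (dm (2^L) * dm (2^L)) (dm (2^L) * dm (2^L)) (dm (2^L) * dm (2^L))"
proof -
  let ?A = "dm (2^L)" let ?h = "2^L :: nat"
  have A: "?A \<in> carrier_mat ?h ?h" by simp
  have AA: "?A * ?A \<in> carrier_mat ?h ?h" using mult_carrier_mat[OF A A] .
  show ?thesis unfolding dm_block
    by (subst mult_four_block_mat[OF A A A zero_carrier_mat A A A zero_carrier_mat],
      simp add: bit_mat_add_self[OF AA] AA)
qed

lemma dm_cube: "dm (2^L) * dm (2^L) * dm (2^L) = 1\<^sub>m (2^L)"
proof (induction L)
  case 0
  have e: "(2::nat)^0 = 1" by simp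
  show ?case unfolding e dm_one by simp
next
  case (Suc L)
  let ?A = "dm (2^L)" let ?h = "2^L :: nat"
  have A: "?A \<in> carrier_mat ?h ?h" by simp
  have AA: "?A * ?A \<in> carrier_mat ?h ?h" using mult_carrier_mat[OF A A] .
  have AAA: "?A * ?A * ?A \<in> carrier_mat ?h ?h" using mult_carrier_mat[OF AA A] .
  have e: "2 ^ Suc L = ?h + ?h" by simp
  show ?case unfolding e dm_sq_block
    apply (subst dm_block)
    apply (subst mult_four_block_mat[OF zero_carrier_mat AA AA AA A A A zero_carrier_mat])
    using Suc.IH by (simp add: bit_mat_add_self[OF AAA] AAA bit_mat_add_self[OF one_carrier_mat])
qed

lemma split_idx: assumes "(i::nat) < h + h" "\<not> i < h" obtains i0 where "i = i0 + h" "i0 < h"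
  using assms by (intro that[of "i - h"]) auto

lemma fb: assumes B: "B \<in> carrier_mat h h" and "x < h" "y < h" shows
 "four_block_mat (0\<^sub>m h h) B B B $$ (x, y) = 0"
 "four_block_mat (0\<^sub>m h h) B B B $$ (x, y+h) = B $$ (x,y)"
 "four_block_mat (0\<^sub>m h h) B B B $$ (x+h, y) = B $$ (x,y)"
 "four_block_mat (0\<^sub>m h h) B B B $$ (x+h, y+h) = B $$ (x,y)"
  using assms by auto

lemma dm_rev: "i < 2^L \<Longrightarrow> j < 2^L \<Longrightarrow> (dm (2^L) * dm (2^L)) $$ (2^L-1-i, 2^L-1-j) = bc i j"
proof (induction L arbitrary: i j)
  case 0
  have e: "(2::nat)^0 = 1" by simp
  show ?case using 0 unfolding e dm_one by (simp add: bc_def)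
next
  case (Suc L)
  let ?A = "dm (2^L)" let ?h = "2^L :: nat"
  have e: "2 ^ Suc L = ?h + ?h" by simp
  have AA: "?A * ?A \<in> carrier_mat ?h ?h" by simp
  have i': "i < ?h + ?h" and j': "j < ?h + ?h" using Suc.prems by auto
  show ?case unfolding e dm_sq_block
  proof (cases "i < ?h")
    case True note ih = this
    show "four_block_mat (0\<^sub>m ?h ?h) (?A * ?A) (?A * ?A) (?A * ?A) $$ (?h + ?h - 1 - i, ?h + ?h - 1 - j) = bc i j"
    proof (cases "j < ?h")
      case True 
      have e1: "?h + ?h - 1 - i = (?h - 1 - i) + ?h" and e2: "?h + ?h - 1 - j = (?h - 1 - j) + ?h" using ih True by auto
      have l: "?h - 1 - i < ?h" "?h - 1 - j < ?h" using ih True by auto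
      show ?thesis unfolding e1 e2 fb(4)[OF AA l] using Suc.IH[OF ih True] .
    next
      case False
      then obtain j0 where j0: "j = j0 + ?h" "j0 < ?h" using j' split_idx by blast
      have e1: "?h + ?h - 1 - i = (?h - 1 - i) + ?h" and e2: "?h + ?h - 1 - j = ?h - 1 - j0" using ih j0 by auto
      have l: "?h - 1 - i < ?h" "?h - 1 - j0 < ?h" using ih j0 by auto
      have "four_block_mat (0\<^sub>m ?h ?h) (?A * ?A) (?A * ?A) (?A * ?A) $$ (?h + ?h - 1 - i, ?h + ?h - 1 - j) = (?A * ?A) $$ (?h - 1 - i, ?h - 1 - j0)"
        unfolding e1 e2 by (rule fb(3)[OF AA l])
      also have "\<dots> = bc i j0" by (rule Suc.IH[OF ih j0(2)])
      also have "\<dots> = bc i j" unfolding j0(1) bcB[OF ih j0(2)] ..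
      finally show ?thesis .
    qed
  next
    case False
    then obtain i0 where i0: "i = i0 + ?h" "i0 < ?h" using i' split_idx by blast
    show "four_block_mat (0\<^sub>m ?h ?h) (?A * ?A) (?A * ?A) (?A * ?A) $$ (?h + ?h - 1 - i, ?h + ?h - 1 - j) = bc i j"
    proof (cases "j < ?h")
      case True
      have e1: "?h + ?h - 1 - i = ?h - 1 - i0" and e2: "?h + ?h - 1 - j = (?h - 1 - j) + ?h" using i0 True by auto
      have l: "?h - 1 - i0 < ?h" "?h - 1 - j < ?h" using i0 True by auto
      have "four_block_mat (0\<^sub>m ?h ?h) (?A * ?A) (?A * ?A) (?A * ?A) $$ (?h + ?h - 1 - i, ?h + ?h - 1 - j) = (?A * ?A) $$ (?h - 1 - i0, ?h - 1 - j)"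
        unfolding e1 e2 by (rule fb(2)[OF AA l])
      also have "\<dots> = bc i0 j" by (rule Suc.IH[OF i0(2) True])
      also have "\<dots> = bc i j" unfolding i0(1) bcA[OF i0(2) True] ..
      finally show ?thesis .
    next
      case False
      then obtain j0 where j0: "j = j0 + ?h" "j0 < ?h" using j' split_idx by blast
      have e1: "?h + ?h - 1 - i = ?h - 1 - i0" and e2: "?h + ?h - 1 - j = ?h - 1 - j0" using i0 j0 by auto
      have l: "?h - 1 - i0 < ?h" "?h - 1 - j0 < ?h" using i0 j0 by auto
      have "four_block_mat (0\<^sub>m ?h ?h) (?A * ?A) (?A * ?A) (?A * ?A) $$ (?h + ?h - 1 - i, ?h + ?h - 1 - j) = 0"
        unfolding e1 e2 by (rule fb(1)[OF AA l])
      also have "\<dots> = bc i j" unfolding i0(1) j0(1) bcC[OF i0(2) j0(2)] ..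
      finally show ?thesis .
    qed
  qed
qed

lemma jacobi:
  fixes X U :: "'a :: idom mat"
  assumes X: "X \<in> carrier_mat (n+k) (n+k)" and U: "U \<in> carrier_mat (n+k) (n+k)"
    and XU: "X * U = c \<cdot>\<^sub>m 1\<^sub>m (n+k)"
  shows "det X * det (mat k k (\<lambda>(i,j). U $$ (n+i, n+j))) = det (mat n n (\<lambda>(i,j). X $$ (i,j))) * c ^ k"
proof -
  define U12 where "U12 = mat n k (\<lambda>(i,j). U $$ (i, n+j))"
  define U22 where "U22 = mat k k (\<lambda>(i,j). U $$ (n+i, n+j))"
  define X11 where "X11 = mat n n (\<lambda>(i,j). X $$ (i,j))"
  define X21 where "X21 = mat k n (\<lambda>(i,j). X $$ (n+i,j))"
  define W where "W = four_block_mat (1\<^sub>m n) U12 (0\<^sub>m k n) U22"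
  have W: "W \<in> carrier_mat (n+k) (n+k)" unfolding W_def U12_def U22_def by auto
  have detW: "det W = det U22"
    unfolding W_def by (subst det_four_block_mat_lower_left_zero[of _ n _ k]) (auto simp: U12_def U22_def)
  have colW1: "col W j = unit_vec (n+k) j" if "j < n" for j
    by (rule eq_vecI) (use that in \<open>auto simp: W_def U12_def U22_def unit_vec_def\<close>)
  have colW2: "col W j = col U j" if "n \<le> j" "j < n+k" for j
    by (rule eq_vecI) (use that U in \<open>auto simp: W_def U12_def U22_def\<close>)
  have XW: "X * W = four_block_mat X11 (0\<^sub>m n k) X21 (c \<cdot>\<^sub>m 1\<^sub>m k)"
  proof (rule eq_matI)
    fix i j assume i: "i < dim_row (four_block_mat X11 (0\<^sub>m n k) X21 (c \<cdot>\<^sub>m 1\<^sub>m k))"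
      and j: "j < dim_col (four_block_mat X11 (0\<^sub>m n k) X21 (c \<cdot>\<^sub>m 1\<^sub>m k))"
    have i': "i < n+k" and j': "j < n+k" using i j by (auto simp: X11_def)
    show "(X * W) $$ (i,j) = four_block_mat X11 (0\<^sub>m n k) X21 (c \<cdot>\<^sub>m 1\<^sub>m k) $$ (i,j)"
    proof (cases "j < n")
      case True
      have "(X * W) $$ (i,j) = row X i \<bullet> unit_vec (n+k) j"
        using i' j' X W True colW1 by simp
      also have "\<dots> = X $$ (i,j)" using X i' True by simp
      finally show ?thesis using True i' X by (auto simp: X11_def X21_def)
    next
      case False
      have "(X * W) $$ (i,j) = row X i \<bullet> col U j"
        using i' j' X W False colW2 by simp
      also have "\<dots> = (X * U) $$ (i,j)" using i' j' X U by simp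
      also have "\<dots> = (if i = j then c else 0)" using XU i' j' by simp
      finally show ?thesis using False i' j' X by (auto simp: X11_def X21_def)
    qed
  qed (use X W in \<open>auto simp: X11_def\<close>)
  have "det X * det W = det (X * W)" using det_mult[OF X W] by simp
  also have "\<dots> = det X11 * det (c \<cdot>\<^sub>m 1\<^sub>m k)"
    unfolding XW by (rule det_four_block_mat_upper_right_zero) (auto simp: X11_def X21_def)
  also have "det (c \<cdot>\<^sub>m 1\<^sub>m k) = c ^ k" by (simp add: det_smult)
  finally show ?thesis unfolding detW U22_def X11_def .
qed

lemma cbit_hom: "comm_ring_hom (\<lambda>a::bit. [:a:])"
  by unfold_locales (auto simp: one_pCons)

lemma rev_perm: "(\<lambda>i. if i < (k::nat) then k - 1 - i else i) permutes {0..<k}"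
proof (rule bij_imp_permutes)
  show "bij_betw (\<lambda>i. if i < k then k - 1 - i else i) {0..<k} {0..<k}"
    by (rule bij_betw_byWitness[where f'="\<lambda>i. if i < k then k - 1 - i else i"]) auto
qed auto

lemma det_rev:
  fixes Y :: "'a :: comm_ring_1 mat"
  assumes Y: "Y \<in> carrier_mat k k"
  shows "det (mat k k (\<lambda>(i,j). Y $$ (k-1-i, k-1-j))) = det Y"
proof -
  define r where "r = (\<lambda>i. if i < k then k - 1 - i else i)"
  have p: "r permutes {0..<k}" unfolding r_def by (rule rev_perm)
  define Y1 where "Y1 = mat k k (\<lambda>(i,j). Y $$ (r i, j))"
  have d1: "det Y1 = signof r * det Y" unfolding Y1_def by (rule det_permute_rows[OF Y p])
  have Z: "transpose_mat Y1 \<in> carrier_mat k k" by (simp add: Y1_def)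
  define Y2 where "Y2 = mat k k (\<lambda>(i,j). transpose_mat Y1 $$ (r i, j))"
  have d2: "det Y2 = signof r * det (transpose_mat Y1)" unfolding Y2_def by (rule det_permute_rows[OF Z p])
  have d3: "det (transpose_mat Y1) = det Y1" by (rule det_transpose[of _ k]) (simp add: Y1_def)
  have e: "mat k k (\<lambda>(i,j). Y $$ (k-1-i, k-1-j)) = transpose_mat Y2"
    by (rule eq_matI) (auto simp: Y2_def Y1_def r_def)
  have d4: "det (transpose_mat Y2) = det Y2" by (rule det_transpose[of _ k]) (simp add: Y2_def)
  have s: "signof r * signof r = (1::'a)" by (simp add: sign_def)
  show ?thesis unfolding e d4 d2 d3 d1
    by (metis (no_types, lifting) mult.assoc mult_1 s)
qed

lemma cpm_dm: "m \<le> M \<Longrightarrow> mat m m (\<lambda>(i,j). char_poly_matrix (dm M) $$ (i,j)) = char_poly_matrix (dm m)"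
  by (rule eq_matI) (auto simp: char_poly_matrix_def)

lemma XU_identity:
  fixes N :: "bit mat"
  assumes N: "N \<in> carrier_mat M M" and N3: "N * N * N = 1\<^sub>m M"
  defines "U \<equiv> mat M M (\<lambda>(i,j). (if i = j then [:0,0,1:] else 0) + [:0, N $$ (i,j):] + [:(N * N) $$ (i,j):])"
  shows "char_poly_matrix N * U = [:1,0,0,1:] \<cdot>\<^sub>m 1\<^sub>m M"
proof -
  interpret cbit: comm_ring_hom "\<lambda>a::bit. [:a:]" by (rule cbit_hom)
  let ?t = "[:0,1:] :: bit poly"
  define N' where "N' = map_mat (\<lambda>a. [:a:]) N"
  have N': "N' \<in> carrier_mat M M" using N by (simp add: N'_def)
  have NN': "N' * N' = map_mat (\<lambda>a. [:a:]) (N * N)" unfolding N'_def using cbit.mat_hom_mult[OF N N] by simp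
  have NNN': "N' * N' * N' = 1\<^sub>m M"
  proof -
    have "N' * N' * N' = map_mat (\<lambda>a. [:a:]) (N * N) * map_mat (\<lambda>a. [:a:]) N"
      using NN' unfolding N'_def by simp
    also have "\<dots> = map_mat (\<lambda>a. [:a:]) (N * N * N)"
      using cbit.mat_hom_mult[OF mult_carrier_mat[OF N N] N] by simp
    also have "\<dots> = 1\<^sub>m M" unfolding N3 by (rule eq_matI) auto
    finally show ?thesis .
  qed
  have X: "char_poly_matrix N = ?t \<cdot>\<^sub>m 1\<^sub>m M + N'"
    by (rule eq_matI) (use N in \<open>auto simp: char_poly_matrix_def N'_def\<close>)
  have Ue: "U = (?t * ?t) \<cdot>\<^sub>m 1\<^sub>m M + ?t \<cdot>\<^sub>m N' + N' * N'"
    unfolding NN' by (rule eq_matI) (use N in \<open>auto simp: U_def N'_def\<close>)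
  have U: "U \<in> carrier_mat M M" by (simp add: U_def)
  have "char_poly_matrix N * U = ?t \<cdot>\<^sub>m U + N' * U"
    unfolding X using U N' by (simp add: add_mult_distrib_mat[of _ M M] mult_smult_assoc_mat[OF one_carrier_mat U] left_mult_one_mat[OF U])
  also have "N' * U = (?t * ?t) \<cdot>\<^sub>m N' + ?t \<cdot>\<^sub>m (N' * N') + N' * N' * N'"
  proof -
    have a: "(?t * ?t) \<cdot>\<^sub>m 1\<^sub>m M \<in> carrier_mat M M" by simp
    have b: "?t \<cdot>\<^sub>m N' \<in> carrier_mat M M" using N' by simp
    have c: "N' * N' \<in> carrier_mat M M" using N' by simp
    have "N' * U = N' * ((?t * ?t) \<cdot>\<^sub>m 1\<^sub>m M + ?t \<cdot>\<^sub>m N') + N' * (N' * N')"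
      unfolding Ue by (rule mult_add_distrib_mat[OF N' add_carrier_mat[OF b] c])
    also have "N' * ((?t * ?t) \<cdot>\<^sub>m 1\<^sub>m M + ?t \<cdot>\<^sub>m N') = N' * ((?t * ?t) \<cdot>\<^sub>m 1\<^sub>m M) + N' * (?t \<cdot>\<^sub>m N')"
      by (rule mult_add_distrib_mat[OF N' a b])
    also have "N' * ((?t * ?t) \<cdot>\<^sub>m 1\<^sub>m M) = (?t * ?t) \<cdot>\<^sub>m N'"
      using mult_smult_distrib[OF N' one_carrier_mat] right_mult_one_mat[OF N'] by simp
    also have "N' * (?t \<cdot>\<^sub>m N') = ?t \<cdot>\<^sub>m (N' * N')"
      by (rule mult_smult_distrib[OF N' N'])
    also have "N' * (N' * N') = N' * N' * N'"
      by (rule assoc_mult_mat[OF N' N' N', symmetric])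
    finally show ?thesis .
  qed
  finally have e: "char_poly_matrix N * U = ?t \<cdot>\<^sub>m U + ((?t * ?t) \<cdot>\<^sub>m N' + ?t \<cdot>\<^sub>m (N' * N') + 1\<^sub>m M)"
    unfolding NNN' .
  show ?thesis unfolding e
    by (rule eq_matI) (use N N' in \<open>auto simp: Ue algebra_simps\<close>)
qed

lemma main_rel:
  assumes k: "k \<le> 2^L"
  shows "char_poly (dm (2^Suc L)) * (char_poly (dm k) \<circ>\<^sub>p [:0,0,1:])
       = char_poly (dm (2^Suc L - k)) * [:1,0,0,1:] ^ k"
proof -
  define M where "M = (2::nat)^Suc L"
  define n where "n = M - k"
  define N where "N = dm M"
  have Mk: "M = n + k" using k by (simp add: n_def M_def)
  have N: "N \<in> carrier_mat (n+k) (n+k)" using Mk by (simp add: N_def)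
  have N3': "N * N * N = 1\<^sub>m M" unfolding N_def M_def by (rule dm_cube)
  have N3: "N * N * N = 1\<^sub>m (n+k)" using N3' Mk by simp
  define U where "U = mat (n+k) (n+k) (\<lambda>(i,j). (if i = j then [:0,0,1:] else 0) + [:0, N $$ (i,j):] + [:(N * N) $$ (i,j):])"
  have XU: "char_poly_matrix N * U = [:1,0,0,1:] \<cdot>\<^sub>m 1\<^sub>m (n+k)"
    unfolding U_def by (rule XU_identity[OF N N3])
  have X: "char_poly_matrix N \<in> carrier_mat (n+k) (n+k)" using N by simp
  have U: "U \<in> carrier_mat (n+k) (n+k)" by (simp add: U_def)
  note J = jacobi[OF X U XU]
  have X11: "mat n n (\<lambda>(i,j). char_poly_matrix N $$ (i,j)) = char_poly_matrix (dm n)"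
    unfolding N_def by (rule cpm_dm) (simp add: Mk)
  define q where "q = ([:0,0,1:] :: bit poly)"
  define Y where "Y = map_mat (\<lambda>p. p \<circ>\<^sub>p q) (char_poly_matrix (dm k))"
  have Y: "Y \<in> carrier_mat k k" by (simp add: Y_def)
  have U22: "mat k k (\<lambda>(i,j). U $$ (n+i, n+j)) = mat k k (\<lambda>(i,j). Y $$ (k-1-i, k-1-j))"
  proof (rule eq_matI)
    fix i j assume "i < dim_row (mat k k (\<lambda>(i,j). Y $$ (k-1-i, k-1-j)))" "j < dim_col (mat k k (\<lambda>(i,j). Y $$ (k-1-i, k-1-j)))"
    then have i: "i < k" and j: "j < k" by auto
    have h: "2^L \<le> n" using k by (simp add: n_def M_def)
    have z: "N $$ (n+i, n+j) = 0"
    proof -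
      have "N $$ (n+i, n+j) = bc ((n+i-2^L) + 2^L) ((n+j-2^L) + 2^L)"
        using i j h by (simp add: N_def Mk)
      also have "\<dots> = 0" by (rule bcC) (use i j h Mk M_def in auto)
      finally show ?thesis .
    qed
    have r: "(N * N) $$ (n+i, n+j) = bc (k-1-i) (k-1-j)"
    proof -
      have "n + i = 2^Suc L - 1 - (k-1-i)" "n + j = 2^Suc L - 1 - (k-1-j)"
        using i j Mk M_def by auto
      then show ?thesis unfolding N_def M_def
        using dm_rev[of "k-1-i" "Suc L" "k-1-j"] i j k by simp
    qed
    have cp: "char_poly_matrix (dm k) $$ (k-1-i, k-1-j) = (if i = j then [:0,1:] else 0) + [:bc (k-1-i) (k-1-j):]"
      using i j by (auto simp: char_poly_matrix_def)
    have cpk: "char_poly_matrix (dm k) \<in> carrier_mat k k" by simp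
    have yv: "Y $$ (k-1-i, k-1-j) = ((if i = j then [:0,1:] else 0) + [:bc (k-1-i) (k-1-j):]) \<circ>\<^sub>p q"
    proof -
      have "dim_row (char_poly_matrix (dm k)) = k" "dim_col (char_poly_matrix (dm k)) = k" using carrier_matD[OF cpk] by auto
      then show ?thesis unfolding Y_def cp[symmetric] using i j by simp
    qed
    have yv2: "((if i = j then [:0,1:] else 0) + [:bc (k-1-i) (k-1-j):]) \<circ>\<^sub>p q
       = (if i = j then [:0,0,1:] else 0) + [:bc (k-1-i) (k-1-j):]"
      by (cases "i = j") (simp_all add: pcompose_add pcompose_pCons q_def)
    have "mat k k (\<lambda>(i,j). Y $$ (k-1-i, k-1-j)) $$ (i,j) = Y $$ (k-1-i, k-1-j)" using i j by simp
    also have "\<dots> = (if i = j then [:0,0,1:] else 0) + [:bc (k-1-i) (k-1-j):]" unfolding yv yv2 ..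
    also have "\<dots> = U $$ (n+i, n+j)" using i j z r by (simp add: U_def)
    finally show "mat k k (\<lambda>(i,j). U $$ (n+i, n+j)) $$ (i,j) = mat k k (\<lambda>(i,j). Y $$ (k-1-i, k-1-j)) $$ (i,j)"
      using i j by simp
  qed simp_all
  have dU: "det (mat k k (\<lambda>(i,j). U $$ (n+i, n+j))) = char_poly (dm k) \<circ>\<^sub>p q"
    unfolding U22 det_rev[OF Y] unfolding Y_def char_poly_def by (simp add: comm_ring_hom.hom_det[OF pcompose_hom.comm_ring_hom_axioms])
  show ?thesis using J unfolding dU X11 M_def[symmetric] n_def[symmetric] N_def[symmetric] q_def
    by (simp add: char_poly_def)
qed

lemma e1: "[:1,1:] * [:1,1:] = ([:1,0,1:] :: bit poly)"
  by (simp add: one_pCons del: pCons_one)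
lemma e2: "[:1,1,1:] * [:1,1,1:] = ([:1,0,1,0,1:] :: bit poly)"
  by (simp add: one_pCons del: pCons_one)
lemma e3: "[:1,1:] * [:1,1,1:] = ([:1,0,0,1:] :: bit poly)"
  by (simp add: one_pCons del: pCons_one)
lemma e4: "[:1,1,1:] + [:0,1:] * [:1,1:] = (1 :: bit poly)"
  by (simp add: one_pCons del: pCons_one)
lemma e5: "[:1,1:] \<circ>\<^sub>p [:0,0,1:] = ([:1,0,1:] :: bit poly)"
  by (simp add: one_pCons pcompose_pCons del: pCons_one)
lemma e6: "[:1,1,1:] \<circ>\<^sub>p [:0,0,1:] = ([:1,0,1,0,1:] :: bit poly)"
  by (simp add: one_pCons pcompose_pCons del: pCons_one)

definition F :: "nat \<Rightarrow> nat \<Rightarrow> bit poly" where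
  "F a b = [:1,1:] ^ a * [:1,1,1:] ^ b"

lemma F_nz: "F a b \<noteq> 0" by (simp add: F_def)

lemma F_mult: "F a b * F c d = F (a+c) (b+d)"
  by (simp add: F_def power_add algebra_simps)

lemma rq: "[:1,0,0,1:] = F 1 1"
  by (simp only: F_def power_one_right e3)

lemma F_comp: "F a b \<circ>\<^sub>p [:0,0,1:] = F (2*a) (2*b)"
proof -
  have "F a b \<circ>\<^sub>p [:0,0,1:] = ([:1,1:] \<circ>\<^sub>p [:0,0,1:]) ^ a * ([:1,1,1:] \<circ>\<^sub>p [:0,0,1:]) ^ b"
    unfolding F_def by (simp only: pcompose_hom.hom_mult pcompose_hom.hom_power)
  also have "\<dots> = ([:1,1:] * [:1,1:]) ^ a * ([:1,1,1:] * [:1,1,1:]) ^ b"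
    unfolding e1 e2 e5 e6 ..
  also have "\<dots> = F (2*a) (2*b)" unfolding F_def
    by (simp only: power2_eq_square[symmetric] power_mult)
  finally show ?thesis .
qed

lemma degree_F: "degree (F a b) = a + 2*b"
  by (simp add: F_def degree_mult_eq degree_power_eq)

lemma coprime_rq: "coprime [:1,1::bit:] [:1,1,1:]"
proof (rule coprimeI)
  fix c assume "c dvd [:1,1::bit:]" "c dvd [:1,1,1:]"
  then have "c dvd [:1,1,1:] + [:0,1:] * [:1,1::bit:]" by (simp only: dvd_add dvd_mult)
  then show "is_unit c" unfolding e4 .
qed

lemma factor:
  assumes e: "p * F x y = F A B"
  shows "x \<le> A \<and> y \<le> B \<and> p = F (A-x) (B-y)"
proof -
  define r where "r = [:1,1::bit:]"
  define q where "q = [:1,1,1::bit:]"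
  have e': "p * (r ^ x * q ^ y) = r ^ A * q ^ B" using e unfolding F_def r_def q_def .
  have rnz: "r \<noteq> 0" and qnz: "q \<noteq> 0" by (simp_all add: r_def q_def)
  have xA: "x \<le> A"
  proof (rule ccontr)
    assume "\<not> x \<le> A"
    then obtain d where d: "x = A + d" "d > 0" by (metis less_imp_add_positive not_le)
    have "r ^ A * (p * r ^ d * q ^ y) = r ^ A * q ^ B"
      using e' unfolding d(1) power_add by (simp add: ac_simps)
    then have "p * r ^ d * q ^ y = q ^ B" using rnz by simp
    then have "poly (p * r ^ d * q ^ y) 1 = poly (q ^ B) 1" by simp
    then show False using d(2) by (simp add: r_def q_def)
  qed
  have yB: "y \<le> B"
  proof (rule ccontr)
    assume "\<not> y \<le> B"
    then obtain d where d: "y = B + d" "d > 0" by (metis less_imp_add_positive not_le)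
    have "q ^ B * (p * r ^ x * q ^ d) = q ^ B * r ^ A"
      using e' unfolding d(1) power_add by (simp add: ac_simps)
    then have eq: "p * r ^ x * q ^ d = r ^ A" using qnz by simp
    have "q dvd q ^ d" using d(2) by (simp add: dvd_power)
    then have "q dvd p * r ^ x * q ^ d" by (rule dvd_mult)
    then have "q dvd r ^ A" unfolding eq .
    have u: "[:0,1:] * r = 1 + q"
    proof -
      have "q + [:0,1:] * r = 1" unfolding q_def r_def by (rule e4)
      then have "[:0,1:] * r = 1 - q" by (simp add: eq_diff_eq add.commute)
      also have "(1::bit poly) - q = 1 + q" by (simp add: diff_eq_eq add.assoc)
      finally show ?thesis .
    qed
    have "\<exists>s. (1 + q) ^ m = 1 + q * s" for m
    proof (induction m)
      case 0 then show ?case by (intro exI[of _ 0]) simp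
    next
      case (Suc m)
      then obtain s where "(1 + q) ^ m = 1 + q * s" by blast
      then have "(1 + q) ^ Suc m = 1 + q * (1 + s + q * s)" by (simp add: algebra_simps)
      then show ?case by blast
    qed
    then obtain s where s: "(1 + q) ^ A = 1 + q * s" by blast
    have "q dvd r ^ A * [:0,1:] ^ A" using \<open>q dvd r ^ A\<close> by (rule dvd_mult2)
    also have "r ^ A * [:0,1:] ^ A = 1 + q * s" unfolding s[symmetric] u[symmetric]
      by (simp only: power_mult_distrib mult.commute)
    finally have "q dvd 1 + q * s" .
    then have "q dvd 1" by (simp add: dvd_add_left_iff)
    then have "is_unit q" .
    then show False by (simp add: is_unit_iff_degree qnz q_def)
  qed
  have "p * (r ^ x * q ^ y) = (r ^ (A-x) * q ^ (B-y)) * (r ^ x * q ^ y)"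
    using e' xA yB by (simp add: power_add[symmetric] ac_simps)
  then have "p = r ^ (A-x) * q ^ (B-y)" using rnz qnz by simp
  then show ?thesis using xA yB unfolding F_def r_def q_def by simp
qed

definition cc :: "nat \<Rightarrow> int" where "cc L = (2 ^ L + 2 * (-1) ^ L) div 3"

lemma gamma_exp_pow: "gamma_exp (2^L) = L"
  unfolding gamma_exp_def by (rule Least_equality) auto

lemma gamma_exp_lower: assumes "gamma_exp n = Suc L" shows "2^L < n"
proof -
  have "\<not> n \<le> 2 ^ L" using assms unfolding gamma_exp_def
    using not_less_Least[of L "\<lambda>l. n \<le> 2 ^ l"] by simp
  then show ?thesis by simp
qed

lemma gamma_0: "gamma 0 = 0" by (simp add: gamma.simps)

lemma gamma_pow: "gamma (2^L) = cc L"
  by (subst gamma.simps) (simp add: gamma_exp_pow gamma_0 cc_def)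

lemma cc_dvd: "(3::int) dvd 2 ^ L + 2 * (-1) ^ L"
proof (induction L)
  case 0 then show ?case by simp
next
  case (Suc L)
  have eq: "(2::int) ^ Suc L + 2 * (-1) ^ Suc L = 3 * 2^L - (2 ^ L + 2 * (-1) ^ L)" by simp
  have "(3::int) dvd 3 * 2^L - (2 ^ L + 2 * (-1) ^ L)" using Suc by (intro dvd_diff) auto
  then show ?case unfolding eq .
qed

lemma cc_Suc: "cc (Suc L) = 2^L - cc L"
proof -
  obtain z where z: "(2::int) ^ L + 2 * (-1) ^ L = 3 * z" using cc_dvd by blast
  have "(2::int) ^ Suc L + 2 * (-1) ^ Suc L = 3 * (2^L - z)" using z by simp
  then show ?thesis unfolding cc_def using z by simp
qed

lemma gamma_rec: assumes "n \<noteq> 0" "gamma_exp n = l"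
  shows "gamma n = cc l - int (2^l - n) + 2 * gamma (2^l - n)"
  using assms by (subst gamma.simps) (simp add: cc_def Let_def)

definition S :: "nat \<Rightarrow> bool" where
  "S n \<longleftrightarrow> (\<exists>a b. char_poly (dm n) = F a b \<and> int a = gamma n)"

lemma S_gamma2: assumes "char_poly (dm n) = F a b" "int a = gamma n"
  shows "int b = gamma2 n"
proof -
  have "degree (char_poly (dm n)) = n" using degree_monic_char_poly[OF dm_carrier] by simp
  then have "n = a + 2 * b" using assms degree_F by simp
  then show ?thesis unfolding gamma2_def using assms(2)[symmetric] by simp
qed

lemma S_0: "S 0"
proof -
  have "char_poly_matrix (dm 0) = 1\<^sub>m 0" by (rule eq_matI) (auto simp: char_poly_matrix_def)
  then have "char_poly (dm 0) = F 0 0" by (simp add: char_poly_def F_def)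
  then show ?thesis unfolding S_def using gamma_0 by auto
qed

lemma F_pow: "F 1 1 ^ k = F k k"
proof (induction k)
  case 0 show ?case by (simp add: F_def)
next
  case (Suc k)
  have "F 1 1 ^ Suc k = F 1 1 * F k k" using Suc by simp
  also have "\<dots> = F (Suc k) (Suc k)" by (simp add: F_mult)
  finally show ?case .
qed

lemma S_pow: "S (2^L)"
proof (induction L)
  case 0
  have "char_poly (dm 1) = F 1 0"
    by (simp add: F_def char_poly_def char_poly_matrix_def dm_def det_def bc_def)
  moreover have "gamma 1 = 1" using gamma_pow[of 0] by (simp add: cc_def)
  ultimately show ?case unfolding S_def by auto
next
  case (Suc L)
  then obtain a b where ab: "char_poly (dm (2^L)) = F a b" "int a = gamma (2^L)" unfolding S_def by auto
  have hm: "2^Suc L - 2^L = (2::nat)^L" by simp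
  have "char_poly (dm (2^Suc L)) * (char_poly (dm (2^L)) \<circ>\<^sub>p [:0,0,1:]) = char_poly (dm (2^Suc L - 2^L)) * [:1,0,0,1:] ^ (2^L)"
    by (rule main_rel) simp
  then have "char_poly (dm (2^Suc L)) * F (2*a) (2*b) = F a b * F (2^L) (2^L)"
    unfolding hm ab(1) F_comp rq F_pow .
  then have e: "char_poly (dm (2^Suc L)) * F (2*a) (2*b) = F (a + 2^L) (b + 2^L)" by (simp add: F_mult)
  note f = factor[OF e]
  have "int (a + 2^L - 2*a) = gamma (2^Suc L)"
  proof -
    have g: "gamma (2^Suc L) = 2^L - cc L" using gamma_pow[of "Suc L"] cc_Suc[of L] by simp
    show ?thesis using f ab(2) unfolding g by (simp add: gamma_pow of_nat_diff)
  qed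
  then show ?case unfolding S_def using f by blast
qed

lemma S_all: "S n"
proof (induction n rule: less_induct)
  case (less n)
  show ?case
  proof (cases "n = 0")
    case True then show ?thesis using S_0 by simp
  next
    case nz: False
    show ?thesis
    proof (cases "gamma_exp n")
      case 0
      then have "n = 1" using gamma_exp_le[of n] nz by simp
      then show ?thesis using S_pow[of 0] by simp
    next
      case (Suc L)
      define k where "k = 2^Suc L - n"
      have lo: "2^L < n" using gamma_exp_lower[OF Suc] .
      have hi: "n \<le> 2^Suc L" using gamma_exp_le[of n] Suc by simp
      have kL: "k \<le> 2^L" using lo hi by (simp add: k_def)
      have kn: "k < n" using lo hi by (simp add: k_def)
      have nk: "2^Suc L - k = n" using hi by (simp add: k_def)
      obtain a b where ab: "char_poly (dm k) = F a b" "int a = gamma k"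
        using less.IH[OF kn] unfolding S_def by auto
      obtain a' b' where ab': "char_poly (dm (2^Suc L)) = F a' b'" "int a' = gamma (2^Suc L)"
        using S_pow[of "Suc L"] unfolding S_def by auto
      have "char_poly (dm (2^Suc L)) * (char_poly (dm k) \<circ>\<^sub>p [:0,0,1:]) = char_poly (dm (2^Suc L - k)) * [:1,0,0,1:] ^ k"
        by (rule main_rel[OF kL])
      then have "F a' b' * F (2*a) (2*b) = char_poly (dm n) * F k k"
        unfolding ab(1) ab'(1) nk F_comp rq F_pow .
      then have e: "char_poly (dm n) * F k k = F (a' + 2*a) (b' + 2*b)" unfolding F_mult by (rule sym)
      have g: "gamma (2^Suc L) = cc (Suc L)" by (rule gamma_pow)
      have a': "int a' = cc (Suc L)" using ab'(2) unfolding g .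
      note f = factor[OF e]
      have "gamma n = cc (Suc L) - int k + 2 * gamma k"
        using gamma_rec[OF nz Suc] by (simp add: k_def)
      then have "int (a' + 2*a - k) = gamma n"
        using f ab(2) a' by (simp add: of_nat_diff)
      then show ?thesis unfolding S_def using f by blast
    qed
  qed
qed

lemma of_int_bit: "(of_int x :: bit) = (if even x then 0 else 1)"
proof -
  have x: "x = 2 * (x div 2) + x mod 2" by simp
  have "(of_int x :: bit) = of_int (2 * (x div 2)) + of_int (x mod 2)"
    by (subst x) (simp only: of_int_add)
  also have "(of_int (2 * (x div 2)) :: bit) = 0" by simp
  finally show ?thesis by (cases "even x") (auto simp: odd_iff_mod_2_eq_one even_iff_mod_2_eq_zero)
qed

lemma of_int_bit_cong: "(of_int x :: bit) = of_int y \<Longrightarrow> [x = y] (mod 2)"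
  unfolding of_int_bit cong_def by (auto split: if_splits simp: even_iff_mod_2_eq_zero odd_iff_mod_2_eq_one)

theorem theorem1p4:
  fixes n :: nat
  shows "\<forall>i. [coeff (char_poly (pascal_mat n)) i
            = coeff ([:1, 1:] ^ nat (gamma n) * [:1, 1, 1:] ^ nat (gamma2 n)) i] (mod 2)"
proof
  fix i
  obtain a b where ab: "char_poly (dm n) = F a b" "int a = gamma n"
    using S_all[of n] unfolding S_def by auto
  have b: "int b = gamma2 n" by (rule S_gamma2[OF ab])
  have na: "nat (gamma n) = a" "nat (gamma2 n) = b" using ab(2) b by auto
  have P: "pascal_mat n \<in> carrier_mat n n" by (simp add: pascal_mat_def)
  have dmP: "map_mat of_int (pascal_mat n) = dm n"
    by (rule eq_matI) (auto simp: pascal_mat_def dm_def bc_def)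
  have c1: "map_poly (of_int :: int \<Rightarrow> bit) (char_poly (pascal_mat n)) = F a b"
  proof -
    have "map_poly (of_int :: int \<Rightarrow> bit) (char_poly (pascal_mat n)) = char_poly (map_mat of_int (pascal_mat n))"
      by (rule of_int_hom.char_poly_hom[OF P, symmetric])
    also have "\<dots> = F a b" unfolding dmP by (rule ab(1))
    finally show ?thesis .
  qed
  have c2: "map_poly (of_int :: int \<Rightarrow> bit) ([:1, 1:] ^ a * [:1, 1, 1:] ^ b) = F a b"
    by (simp add: F_def of_int_poly_hom.hom_mult of_int_poly_hom.hom_power)
  have "(of_int (coeff (char_poly (pascal_mat n)) i) :: bit) = of_int (coeff ([:1, 1:] ^ a * [:1, 1, 1:] ^ b) i)"
    using arg_cong[OF c1, of "\<lambda>p. coeff p i"] arg_cong[OF c2, of "\<lambda>p. coeff p i"]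
    by (simp add: coeff_map_poly)
  then show "[coeff (char_poly (pascal_mat n)) i
            = coeff ([:1, 1:] ^ nat (gamma n) * [:1, 1, 1:] ^ nat (gamma2 n)) i] (mod 2)"
    unfolding na by (rule of_int_bit_cong)
qed

end
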